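(* Let $\Omega\subset\mathbb R^n$ be open, $\mathbf B:\Omega\to\mathbb R^{d\times d}_{\rm sym}$ a smooth field of positive definite matrices and $r\in\mathbb R\setminus\{-1\}$. Then pointwise in $\Omega$, $\nabla\mathbf B^r\cdot\nabla\mathbf B=\sum_{k=1}^n\Big(\frac{\sinh(r\,\mathsf{Ad}_{\log\mathbf B})\sinh(\mathsf{Ad}_{\log\mathbf B})}{\sinh^2(\frac{r+1}2\mathsf{Ad}_{\log\mathbf B})}\partial_k\mathbf B^{\frac{r+1}2}\Big)\cdot\partial_k\mathbf B^{\frac{r+1}2},$ where the operator is the continuous extension of $z\mapsto\frac{\sinh(rz)\sinh z}{\sinh^2(\frac{r+1}2z)}$ (value $\frac{4r}{(r+1)^2}$ at $z=0$) applied to $\mathsf{Ad}_{\log\mathbf B}$, and $\nabla\mathbf M\cdot\nabla\mathbf N:=\sum_k\partial_k\mathbf M\cdot\partial_k\mathbf N$.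
   Context: $\mathsf{Ad}_{\mathbf G}\mathbf X=\tfrac12(\mathbf G\mathbf X-\mathbf X\mathbf G)$. For symmetric $\mathbf G=\mathbf Q\operatorname{diag}(g_i)\mathbf Q^{\mathsf T}$ ($\mathbf Q$ orthogonal) and a real function $h$, $h(\mathsf{Ad}_{\mathbf G})\mathbf X:=\mathbf Q\big([h(\frac{g_i-g_j}2)]\odot(\mathbf Q^{\mathsf T}\mathbf X\mathbf Q)\big)\mathbf Q^{\mathsf T}$ ($\odot$ entrywise product), removable discontinuities replaced by limits. Matrix powers and logarithm are defined spectrally. $\mathbf A\cdot\mathbf B:=\sum_{i,j}\mathbf A_{ij}\mathbf B_{ij}$. *)

theory Defs
  imports "HOL-Analysis.Analysis"
begin

type_synonym ('d) mat = "real ^ 'd ^ 'd"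

definition diag_mat :: "('d::finite \<Rightarrow> real) \<Rightarrow> real ^ 'd ^ 'd" where
  "diag_mat g = (\<chi> i j. if i = j then g i else 0)"

definition sym_mat :: "real ^ 'd ^ 'd \<Rightarrow> bool" where
  "sym_mat A \<longleftrightarrow> transpose A = A"

definition pos_def :: "real ^ 'd ^ 'd \<Rightarrow> bool" where
  "pos_def A \<longleftrightarrow> sym_mat A \<and> (\<forall>x. x \<noteq> 0 \<longrightarrow> x \<bullet> (A *v x) > 0)"

definition mat_fun :: "(real \<Rightarrow> real) \<Rightarrow> real ^ 'd ^ 'd \<Rightarrow> real ^ 'd ^ 'd" where
  "mat_fun h A = (SOME M. \<exists>Q g. orthogonal_matrix Q \<and> A = Q ** diag_mat g ** transpose Q
                     \<and> M = Q ** diag_mat (\<lambda>i. h (g i)) ** transpose Q)"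

definition mat_pow :: "real \<Rightarrow> real ^ 'd ^ 'd \<Rightarrow> real ^ 'd ^ 'd" where
  "mat_pow r A = mat_fun (\<lambda>t. t powr r) A"

definition mat_log :: "real ^ 'd ^ 'd \<Rightarrow> real ^ 'd ^ 'd" where
  "mat_log A = mat_fun ln A"

definition ad_fun :: "(real \<Rightarrow> real) \<Rightarrow> real ^ 'd ^ 'd \<Rightarrow> real ^ 'd ^ 'd \<Rightarrow> real ^ 'd ^ 'd" where
  "ad_fun h G X = (SOME Y. \<exists>Q g. orthogonal_matrix Q \<and> G = Q ** diag_mat g ** transpose Q
       \<and> Y = Q ** (\<chi> i j. h ((g i - g j) / 2) * (transpose Q ** X ** Q) $ i $ j) ** transpose Q)"

definition frob :: "real ^ 'd ^ 'd \<Rightarrow> real ^ 'd ^ 'd \<Rightarrow> real" (infixl "\<cdot>\<^sub>F" 70) where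
  "A \<cdot>\<^sub>F B = (\<Sum>i\<in>UNIV. \<Sum>j\<in>UNIV. A $ i $ j * B $ i $ j)"

definition partial :: "'n::finite \<Rightarrow> (real ^ 'n \<Rightarrow> 'a::real_normed_vector) \<Rightarrow> real ^ 'n \<Rightarrow> 'a" where
  "partial k f x = vector_derivative (\<lambda>t. f (x + t *\<^sub>R axis k 1)) (at 0)"

definition smooth_on :: "(real ^ 'n::finite) set \<Rightarrow> (real ^ 'n \<Rightarrow> 'a::real_normed_vector) \<Rightarrow> bool" where
  "smooth_on S f \<longleftrightarrow> (\<forall>ks::'n list. continuous_on S (foldr partial ks f)
        \<and> (\<forall>x\<in>S. foldr partial ks f differentiable (at x)))"

definition grad_dot :: "(real ^ 'n::finite \<Rightarrow> real ^ 'd ^ 'd) \<Rightarrow> (real ^ 'n \<Rightarrow> real ^ 'd ^ 'd) \<Rightarrow> real ^ 'n \<Rightarrow> real" where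
  "grad_dot M N x = (\<Sum>k\<in>UNIV. partial k M x \<cdot>\<^sub>F partial k N x)"

definition sinh_ratio :: "real \<Rightarrow> real \<Rightarrow> real" where
  "sinh_ratio r z = (if z = 0 then 4 * r / (r + 1)^2
                     else sinh (r * z) * sinh z / (sinh ((r + 1) / 2 * z))^2)"

end

theory Submission
  imports Defs
begin

lemma sym_dot:
  fixes A :: "real^'d^'d"
  assumes "sym_mat A"
  shows "x \<bullet> (A *v y) = (A *v x) \<bullet> y"
proof -
  have "x \<bullet> (A *v y) = (x v* A) \<bullet> y" by (simp add: dot_lmul_matrix)
  also have "x v* A = transpose A *v x" by simp
  also have "transpose A = A" using assms by (simp add: sym_mat_def)
  finally show ?thesis .
qed

lemma max_eig_orth:
  fixes A :: "real^'d^'d"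
  assumes sym: "sym_mat A" and S: "subspace S" and u: "u \<in> S" "norm u = 1"
    and mx: "\<And>v. v \<in> S \<Longrightarrow> norm v = 1 \<Longrightarrow> v \<bullet> (A *v v) \<le> u \<bullet> (A *v u)"
    and y: "y \<in> S" "y \<bullet> u = 0"
  shows "y \<bullet> (A *v u) = 0"
proof -
  define l where "l = u \<bullet> (A *v u)"
  define c where "c = y \<bullet> (A *v u)"
  define K where "K = l * (y \<bullet> y) - y \<bullet> (A *v y)"
  have uu: "u \<bullet> u = 1" using u by (simp add: dot_square_norm)
  have key: "2 * t * c \<le> t^2 * K" for t
  proof -
    define w where "w = u + t *\<^sub>R y"
    have ww: "w \<bullet> w = 1 + t^2 * (y \<bullet> y)"
      unfolding w_def using y uu by (simp add: inner_add inner_commute power2_eq_square algebra_simps)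
    have wpos: "w \<bullet> w > 0" unfolding ww by (simp add: add_pos_nonneg)
    hence "w \<noteq> 0" by auto
    hence nw: "norm w > 0" by simp
    have wS: "w \<in> S" unfolding w_def using S u y by (simp add: subspace_add subspace_scale)
    have "(w /\<^sub>R norm w) \<in> S" using S wS by (simp add: subspace_scale)
    moreover have "norm (w /\<^sub>R norm w) = 1" using nw by simp
    ultimately have "(w /\<^sub>R norm w) \<bullet> (A *v (w /\<^sub>R norm w)) \<le> l" using mx l_def by blast
    moreover have "(w /\<^sub>R norm w) \<bullet> (A *v (w /\<^sub>R norm w)) = (w \<bullet> (A *v w)) / (norm w)^2"
      by (simp add: matrix_vector_mult_scaleR power2_eq_square divide_inverse algebra_simps)
    ultimately have "(w \<bullet> (A *v w)) / (norm w)^2 \<le> l" by simp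
    hence "w \<bullet> (A *v w) \<le> l * (norm w)^2" using nw by (simp add: divide_le_eq)
    also have "(norm w)^2 = w \<bullet> w" by (simp add: dot_square_norm)
    finally have "w \<bullet> (A *v w) \<le> l * (1 + t^2 * (y \<bullet> y))" using ww by simp
    moreover have "w \<bullet> (A *v w) = l + 2 * t * c + t^2 * (y \<bullet> (A *v y))"
    proof -
      have "u \<bullet> (A *v y) = y \<bullet> (A *v u)" using sym_dot[OF sym, of u y] by (simp add: inner_commute)
      thus ?thesis unfolding w_def l_def c_def
        by (simp add: matrix_vector_right_distrib matrix_vector_mult_scaleR inner_add inner_commute power2_eq_square algebra_simps)
    qed
    ultimately show ?thesis unfolding K_def by (simp add: algebra_simps)
  qed
  define a where "a = \<bar>K\<bar>+1"
  have apos: "a > 0" unfolding a_def by simp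
  have "2 * (c / a) * c \<le> (c / a)^2 * K" by (rule key)
  hence "2 * (c / a) * c * a^2 \<le> (c / a)^2 * K * a^2" by (rule mult_right_mono) simp
  moreover have "2 * (c / a) * c * a^2 = 2 * c * c * a" "(c / a)^2 * K * a^2 = c * c * K"
    using apos by (simp_all add: power2_eq_square field_simps)
  ultimately have "2 * c * c * (\<bar>K\<bar>+1) \<le> c * c * K" unfolding a_def by simp
  moreover have "c * c * K \<le> c * c * \<bar>K\<bar>" by (simp add: mult_left_mono)
  ultimately have "c * c * (\<bar>K\<bar> + 2) \<le> 0" by (simp add: algebra_simps)
  moreover have "\<bar>K\<bar> + 2 > 0" by simp
  ultimately have "c * c \<le> 0" by (simp add: mult_le_0_iff)
  hence "c = 0" by (simp add: mult_le_0_iff) (smt (verit) mult_nonneg_nonneg mult_nonpos_nonpos)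
  thus ?thesis by (simp add: c_def)
qed

lemma spectral_sub:
  fixes A :: "real^'d^'d"
  assumes sym: "sym_mat A"
  shows "subspace S \<Longrightarrow> (\<forall>x\<in>S. A *v x \<in> S) \<Longrightarrow> \<exists>E. E \<subseteq> S \<and> pairwise orthogonal E \<and>
     (\<forall>e\<in>E. norm e = 1 \<and> A *v e = (e \<bullet> (A *v e)) *\<^sub>R e) \<and> S \<subseteq> span E"
proof (induction "dim S" arbitrary: S rule: less_induct)
  case less
  show ?case
  proof (cases "S \<subseteq> {0}")
    case True then show ?thesis by (intro exI[of _ "{}"]) auto
  next
    case False
    then obtain x where x: "x \<in> S" "x \<noteq> 0" by auto
    define T where "T = sphere (0::real^'d) 1 \<inter> S"
    have cT: "compact T" unfolding T_def
      by (rule compact_Int_closed[OF compact_sphere closed_subspace[OF less.prems(1)]])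
    have "x /\<^sub>R norm x \<in> T" unfolding T_def using x less.prems(1) by (simp add: subspace_scale)
    hence neT: "T \<noteq> {}" by auto
    have cont: "continuous_on T (\<lambda>y. y \<bullet> (A *v y))" by (intro continuous_intros)
    obtain u where uT: "u \<in> T" and umax: "\<forall>y\<in>T. y \<bullet> (A *v y) \<le> u \<bullet> (A *v u)"
      using continuous_attains_sup[OF cT neT cont] by blast
    have uS: "u \<in> S" and nu: "norm u = 1" using uT unfolding T_def by auto
    have uu: "u \<bullet> u = 1" using nu by (simp add: dot_square_norm)
    define l where "l = u \<bullet> (A *v u)"
    have orth: "y \<bullet> (A *v u) = 0" if "y \<in> S" "y \<bullet> u = 0" for y
      by (rule max_eig_orth[OF sym less.prems(1) uS nu _ that]) (use umax T_def in auto)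
    have AuS: "A *v u \<in> S" using less.prems(2) uS by blast
    define v where "v = A *v u - l *\<^sub>R u"
    have vS: "v \<in> S" unfolding v_def using less.prems(1) AuS uS by (simp add: subspace_diff subspace_scale)
    have vu: "v \<bullet> u = 0" unfolding v_def l_def using uu by (simp add: inner_diff_left inner_commute[of "A *v u" u])
    have "v \<bullet> (A *v u) = 0" using orth[OF vS vu] .
    hence "v \<bullet> v = 0" using vu unfolding v_def by (simp add: inner_diff_right)
    hence "v = 0" by simp
    hence eig: "A *v u = l *\<^sub>R u" unfolding v_def by simp
    define S' where "S' = {y \<in> S. y \<bullet> u = 0}"
    have sub': "subspace S'" using less.prems(1) unfolding S'_def subspace_def
      by (auto simp: inner_add_left)
    have inv': "\<forall>y\<in>S'. A *v y \<in> S'"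
    proof
      fix y assume y: "y \<in> S'"
      have "(A *v y) \<bullet> u = y \<bullet> (A *v u)" using sym_dot[OF sym, of y u] by simp
      also have "\<dots> = 0" using eig y unfolding S'_def by simp
      finally show "A *v y \<in> S'" using y less.prems(2) unfolding S'_def by auto
    qed
    have "u \<notin> S'" using uu unfolding S'_def by auto
    hence "S' \<subset> S" using uS unfolding S'_def by blast
    moreover have "span S' = S'" using sub' by (metis span_eq_iff)
    moreover have "span S = S" using less.prems(1) by (metis span_eq_iff)
    ultimately have "span S' \<subset> span S" by metis
    hence "dim S' < dim S" by (rule dim_psubset)
    then obtain E' where E': "E' \<subseteq> S'" "pairwise orthogonal E'"
       "\<forall>e\<in>E'. norm e = 1 \<and> A *v e = (e \<bullet> (A *v e)) *\<^sub>R e" "S' \<subseteq> span E'"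
      using less.hyps[OF _ sub' inv'] by blast
    define E where "E = insert u E'"
    have "E \<subseteq> S" using E'(1) uS unfolding E_def S'_def by auto
    moreover have "pairwise orthogonal E"
      unfolding E_def pairwise_insert using E'(1,2) unfolding S'_def orthogonal_def
      by (auto simp: inner_commute)
    moreover have "\<forall>e\<in>E. norm e = 1 \<and> A *v e = (e \<bullet> (A *v e)) *\<^sub>R e"
      unfolding E_def using E'(3) nu eig l_def by auto
    moreover have "S \<subseteq> span E"
    proof
      fix z assume z: "z \<in> S"
      have "z - (z \<bullet> u) *\<^sub>R u \<in> S'" unfolding S'_def using z uS less.prems(1) uu
        by (simp add: subspace_diff subspace_scale inner_diff_left)
      hence "z - (z \<bullet> u) *\<^sub>R u \<in> span E" using E'(4) span_mono[of E' E] unfolding E_def by blast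
      moreover have "(z \<bullet> u) *\<^sub>R u \<in> span E" unfolding E_def by (simp add: span_base span_mul)
      ultimately have "(z - (z \<bullet> u) *\<^sub>R u) + (z \<bullet> u) *\<^sub>R u \<in> span E" by (rule span_add)
      thus "z \<in> span E" by simp
    qed
    ultimately show ?thesis by blast
  qed
qed

lemma spectral:
  fixes A :: "real^'d^'d"
  assumes sym: "sym_mat A"
  shows "\<exists>Q g. orthogonal_matrix Q \<and> A = Q ** diag_mat g ** transpose Q"
proof -
  obtain E where E: "pairwise orthogonal E"
     "\<forall>e\<in>E. norm e = 1 \<and> A *v e = (e \<bullet> (A *v e)) *\<^sub>R e" "UNIV \<subseteq> span E"
    using spectral_sub[OF sym, of UNIV] by auto
  have ind: "independent E" using pairwise_orthogonal_independent[OF E(1)] E(2) by force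
  hence fin: "finite E" using finiteI_independent by blast
  have "card E = dim (span E)" using dim_eq_card_independent[OF ind] by simp
  also have "span E = UNIV" using E(3) by auto
  finally have "card E = CARD('d)" by simp
  then obtain \<phi> where phi: "bij_betw \<phi> (UNIV::'d set) E"
    using finite_same_card_bij[of "UNIV::'d set" E] fin by auto
  define Q :: "real^'d^'d" where "Q = (\<chi> i j. \<phi> j $ i)"
  define g where "g j = \<phi> j \<bullet> (A *v \<phi> j)" for j
  have phiE: "\<phi> j \<in> E" for j using phi by (auto simp: bij_betw_def)
  have inj: "inj \<phi>" using phi by (auto simp: bij_betw_def)
  have dotphi: "\<phi> j \<bullet> \<phi> k = (if j = k then 1 else 0)" for j k
  proof (cases "j = k")
    case True
    then show ?thesis using E(2) phiE[of j] by (simp add: dot_square_norm)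
  next
    case False
    hence "\<phi> j \<noteq> \<phi> k" using inj by (auto simp: inj_def)
    then show ?thesis using E(1) phiE[of j] phiE[of k] False
      by (auto simp: pairwise_def orthogonal_def)
  qed
  have QQ: "transpose Q ** Q = mat 1"
    using dotphi by (simp add: vec_eq_iff matrix_matrix_mult_def transpose_def Q_def mat_def inner_vec_def)
  hence orth: "orthogonal_matrix Q" by (simp add: orthogonal_matrix)
  hence QQ': "Q ** transpose Q = mat 1" by (simp add: orthogonal_matrix_def)
  have eig: "A *v \<phi> j = g j *\<^sub>R \<phi> j" for j using E(2) phiE[of j] g_def by auto
  have AQ: "A ** Q = Q ** diag_mat g"
  proof -
    have "(A ** Q) $ i $ j = (Q ** diag_mat g) $ i $ j" for i j
    proof -
      have "(A ** Q) $ i $ j = (A *v \<phi> j) $ i"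
        by (simp add: matrix_matrix_mult_def matrix_vector_mult_def Q_def)
      also have "\<dots> = g j * \<phi> j $ i" using eig by simp
      also have "\<dots> = (Q ** diag_mat g) $ i $ j"
        by (simp add: matrix_matrix_mult_def diag_mat_def Q_def if_distrib cong: if_cong)
      finally show ?thesis .
    qed
    thus ?thesis by (simp add: vec_eq_iff)
  qed
  have "A = A ** (Q ** transpose Q)" using QQ' by simp
  also have "\<dots> = Q ** diag_mat g ** transpose Q" by (simp add: matrix_mul_assoc AQ)
  finally show ?thesis using orth by blast
qed

definition sfun :: "(real \<Rightarrow> real \<Rightarrow> real) \<Rightarrow> real^'d^'d \<Rightarrow> ('d \<Rightarrow> real) \<Rightarrow> real^'d^'d \<Rightarrow> real^'d^'d" where
  "sfun F Q g X = Q ** (\<chi> i j. F (g i) (g j) * (transpose Q ** X ** Q) $ i $ j) ** transpose Q"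

lemma orthD: "orthogonal_matrix Q \<Longrightarrow> transpose Q ** Q = mat 1"
  "orthogonal_matrix Q \<Longrightarrow> Q ** transpose Q = mat 1"
  by (simp_all add: orthogonal_matrix_def)

lemma sum_if_mult1: fixes i :: "'k::finite" shows "(\<Sum>k\<in>UNIV. (if i = k then c else 0) * f k) = c * (f i :: real)"
proof -
  have "(\<Sum>k\<in>UNIV. (if i = k then c else 0) * f k) = (\<Sum>k\<in>UNIV. if i = k then c * f k else 0)"
    by (rule sum.cong) auto
  thus ?thesis by simp
qed

lemma sum_if_mult2: fixes j :: "'k::finite" shows "(\<Sum>k\<in>UNIV. f k * (if k = j then c k else 0)) = (f j :: real) * c j"
proof -
  have "(\<Sum>k\<in>UNIV. f k * (if k = j then c k else 0)) = (\<Sum>k\<in>UNIV. if k = j then f k * c k else 0)"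
    by (rule sum.cong) auto
  thus ?thesis by simp
qed

lemma diag_left: "diag_mat a ** X = (\<chi> i j. a i * X $ i $ j)"
  by (simp add: vec_eq_iff matrix_matrix_mult_def diag_mat_def sum_if_mult1)

lemma diag_right: "X ** diag_mat b = (\<chi> i j. X $ i $ j * b j)"
  by (simp add: vec_eq_iff matrix_matrix_mult_def diag_mat_def sum_if_mult2)

lemma mat_entry3: "(W ** M ** transpose V) $ a $ b = (\<Sum>i\<in>UNIV. \<Sum>j\<in>UNIV. W $ a $ i * M $ i $ j * V $ b $ j)"
proof -
  have "(W ** M ** transpose V) $ a $ b = (\<Sum>j\<in>UNIV. (\<Sum>i\<in>UNIV. W $ a $ i * M $ i $ j) * V $ b $ j)"
    by (simp add: matrix_matrix_mult_def transpose_def)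
  also have "\<dots> = (\<Sum>j\<in>UNIV. \<Sum>i\<in>UNIV. W $ a $ i * M $ i $ j * V $ b $ j)"
    by (simp add: sum_distrib_right)
  also have "\<dots> = (\<Sum>i\<in>UNIV. \<Sum>j\<in>UNIV. W $ a $ i * M $ i $ j * V $ b $ j)"
    by (rule sum.swap)
  finally show ?thesis .
qed

lemma sfun_welldef:
  fixes Q1 Q2 :: "real^'d^'d"
  assumes o1: "orthogonal_matrix Q1" and o2: "orthogonal_matrix Q2"
    and eq: "Q1 ** diag_mat g1 ** transpose Q1 = Q2 ** diag_mat g2 ** transpose Q2"
  shows "sfun F Q1 g1 X = sfun F Q2 g2 X"
proof -
  note a1 = orthD[OF o1] and a2 = orthD[OF o2]
  define W where "W = transpose Q2 ** Q1"
  have "transpose Q2 ** (Q1 ** diag_mat g1 ** transpose Q1) ** Q1 = W ** diag_mat g1"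
    unfolding W_def by (simp add: matrix_mul_assoc[symmetric] a1)
  moreover have "transpose Q2 ** (Q2 ** diag_mat g2 ** transpose Q2) ** Q1 = diag_mat g2 ** W"
    unfolding W_def by (simp add: matrix_mul_assoc a2)
  ultimately have DW: "W ** diag_mat g1 = diag_mat g2 ** W" using eq by simp
  have Wg: "W $ a $ i \<noteq> 0 \<Longrightarrow> g2 a = g1 i" for a i
  proof -
    assume ne: "W $ a $ i \<noteq> 0"
    have "(W ** diag_mat g1) $ a $ i = (diag_mat g2 ** W) $ a $ i" using DW by simp
    hence "W $ a $ i * g1 i = g2 a * W $ a $ i" by (simp add: diag_left diag_right)
    thus ?thesis using ne by simp
  qed
  define Z where "Z = transpose Q1 ** X ** Q1"
  define M1 where "M1 = (\<chi> i j. F (g1 i) (g1 j) * Z $ i $ j)"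
  define M2 where "M2 = (\<chi> i j. F (g2 i) (g2 j) * (transpose Q2 ** X ** Q2) $ i $ j)"
  have WZ: "W ** Z ** transpose W = transpose Q2 ** X ** Q2"
  proof -
    have "W ** Z ** transpose W = transpose Q2 ** (Q1 ** transpose Q1) ** X ** (Q1 ** transpose Q1) ** Q2"
      unfolding W_def Z_def by (simp add: matrix_transpose_mul matrix_mul_assoc)
    thus ?thesis using a1 by simp
  qed
  have WM: "W ** M1 ** transpose W = M2"
  proof -
    have "(W ** M1 ** transpose W) $ a $ b = M2 $ a $ b" for a b
    proof -
      have "(W ** M1 ** transpose W) $ a $ b = (\<Sum>i\<in>UNIV. \<Sum>j\<in>UNIV. W $ a $ i * M1 $ i $ j * W $ b $ j)"
        by (rule mat_entry3)
      also have "\<dots> = (\<Sum>i\<in>UNIV. \<Sum>j\<in>UNIV. F (g2 a) (g2 b) * (W $ a $ i * Z $ i $ j * W $ b $ j))"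
      proof (intro sum.cong refl)
        fix i j
        show "W $ a $ i * M1 $ i $ j * W $ b $ j = F (g2 a) (g2 b) * (W $ a $ i * Z $ i $ j * W $ b $ j)"
          using Wg[of a i] Wg[of b j] unfolding M1_def by (cases "W $ a $ i = 0 \<or> W $ b $ j = 0") auto
      qed
      also have "\<dots> = F (g2 a) (g2 b) * (W ** Z ** transpose W) $ a $ b"
        by (simp add: mat_entry3 sum_distrib_left)
      also have "\<dots> = M2 $ a $ b" unfolding M2_def WZ by simp
      finally show ?thesis .
    qed
    thus ?thesis by (simp add: vec_eq_iff)
  qed
  have "sfun F Q1 g1 X = Q1 ** M1 ** transpose Q1" unfolding sfun_def M1_def Z_def ..
  also have "\<dots> = (Q2 ** transpose Q2) ** (Q1 ** M1 ** transpose Q1) ** (Q2 ** transpose Q2)"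
    using a2 by simp
  also have "\<dots> = Q2 ** (W ** M1 ** transpose W) ** transpose Q2"
    unfolding W_def by (simp add: matrix_transpose_mul matrix_mul_assoc)
  also have "\<dots> = sfun F Q2 g2 X" unfolding WM M2_def sfun_def ..
  finally show ?thesis .
qed

lemma sfun_mat1: "orthogonal_matrix Q \<Longrightarrow> sfun (\<lambda>a b. h a) Q g (mat 1) = Q ** diag_mat (\<lambda>i. h (g i)) ** transpose Q"
proof -
  assume "orthogonal_matrix Q"
  hence "transpose Q ** mat 1 ** Q = mat 1" using orthD by simp
  hence "(\<chi> i j. h (g i) * (transpose Q ** mat 1 ** Q) $ i $ j) = diag_mat (\<lambda>i. h (g i))"
    by (simp add: diag_mat_def mat_def vec_eq_iff)
  thus ?thesis by (simp add: sfun_def)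
qed

lemma mat_fun_eq:
  fixes Q :: "real^'d^'d"
  assumes o: "orthogonal_matrix Q" and A: "A = Q ** diag_mat g ** transpose Q"
  shows "mat_fun h A = Q ** diag_mat (\<lambda>i. h (g i)) ** transpose Q"
proof -
  have "\<exists>Q' g'. orthogonal_matrix Q' \<and> A = Q' ** diag_mat g' ** transpose Q'
     \<and> mat_fun h A = Q' ** diag_mat (\<lambda>i. h (g' i)) ** transpose Q'"
    unfolding mat_fun_def by (rule someI_ex) (use o A in blast)
  then obtain Q' g' where q': "orthogonal_matrix Q'" "A = Q' ** diag_mat g' ** transpose Q'"
     "mat_fun h A = Q' ** diag_mat (\<lambda>i. h (g' i)) ** transpose Q'" by blast
  have "mat_fun h A = sfun (\<lambda>a b. h a) Q' g' (mat 1)" using q' sfun_mat1 by metis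
  also have "\<dots> = sfun (\<lambda>a b. h a) Q g (mat 1)"
    by (rule sfun_welldef[OF q'(1) o]) (use q'(2) A in simp)
  also have "\<dots> = Q ** diag_mat (\<lambda>i. h (g i)) ** transpose Q" using sfun_mat1[OF o] .
  finally show ?thesis .
qed

lemma ad_fun_eq:
  fixes Q :: "real^'d^'d"
  assumes o: "orthogonal_matrix Q" and G: "G = Q ** diag_mat g ** transpose Q"
  shows "ad_fun h G X = sfun (\<lambda>a b. h ((a - b) / 2)) Q g X"
proof -
  have "\<exists>Q' g'. orthogonal_matrix Q' \<and> G = Q' ** diag_mat g' ** transpose Q'
     \<and> ad_fun h G X = Q' ** (\<chi> i j. h ((g' i - g' j) / 2) * (transpose Q' ** X ** Q') $ i $ j) ** transpose Q'"
    unfolding ad_fun_def by (rule someI_ex) (use o G in blast)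
  then obtain Q' g' where q': "orthogonal_matrix Q'" "G = Q' ** diag_mat g' ** transpose Q'"
     "ad_fun h G X = sfun (\<lambda>a b. h ((a - b) / 2)) Q' g' X" unfolding sfun_def by blast
  note q'(3)
  also have "sfun (\<lambda>a b. h ((a - b) / 2)) Q' g' X = sfun (\<lambda>a b. h ((a - b) / 2)) Q g X"
    by (rule sfun_welldef[OF q'(1) o]) (use q'(2) G in simp)
  finally show ?thesis .
qed

lemma ent_diag: "(U ** diag_mat d ** transpose U) $ i $ j = (\<Sum>k\<in>UNIV. U $ i $ k * d k * U $ j $ k)"
  unfolding diag_right by (simp add: matrix_matrix_mult_def transpose_def)

lemma decomp:
  fixes A :: "real^'d^'d"
  assumes "sym_mat A"
  obtains U g where "orthogonal_matrix U" "A = U ** diag_mat g ** transpose U"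
  using spectral[OF assms] by blast

lemma mf_id:
  fixes A :: "real^'d^'d"
  assumes "sym_mat A" shows "mat_fun (\<lambda>x. x) A = A"
proof -
  obtain U g where u: "orthogonal_matrix U" "A = U ** diag_mat g ** transpose U" using decomp[OF assms] .
  show ?thesis using mat_fun_eq[OF u, of "\<lambda>x. x"] u(2) by simp
qed

lemma mf_const:
  fixes A :: "real^'d^'d"
  assumes "sym_mat A" shows "mat_fun (\<lambda>x. c) A = c *\<^sub>R mat 1"
proof -
  obtain U g where u: "orthogonal_matrix U" "A = U ** diag_mat g ** transpose U" using decomp[OF assms] .
  have "diag_mat (\<lambda>i. c) = (c *\<^sub>R mat 1 :: real^'d^'d)" by (simp add: diag_mat_def mat_def vec_eq_iff)
  hence "mat_fun (\<lambda>x. c) A = U ** (c *\<^sub>R mat 1) ** transpose U" using mat_fun_eq[OF u] by simp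
  also have "\<dots> = c *\<^sub>R (U ** transpose U)" by (simp add: matrix_scalar_ac scalar_matrix_assoc)
  finally show ?thesis using orthD(2)[OF u(1)] by simp
qed

lemma mf_add:
  fixes A :: "real^'d^'d"
  assumes "sym_mat A" shows "mat_fun (\<lambda>x. f x + g x) A = mat_fun f A + mat_fun g A"
proof -
  obtain U a where u: "orthogonal_matrix U" "A = U ** diag_mat a ** transpose U" using decomp[OF assms] .
  have "(U ** diag_mat (\<lambda>i. f (a i) + g (a i)) ** transpose U) $ i $ j =
     (U ** diag_mat (\<lambda>i. f (a i)) ** transpose U + U ** diag_mat (\<lambda>i. g (a i)) ** transpose U) $ i $ j" for i j
    unfolding vector_add_component ent_diag sum.distrib[symmetric] by (simp add: distrib_left distrib_right)
  thus ?thesis unfolding mat_fun_eq[OF u] by (simp add: vec_eq_iff)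
qed

lemma mf_mult:
  fixes A :: "real^'d^'d"
  assumes "sym_mat A" shows "mat_fun (\<lambda>x. f x * g x) A = mat_fun f A ** mat_fun g A"
proof -
  obtain U a where u: "orthogonal_matrix U" "A = U ** diag_mat a ** transpose U" using decomp[OF assms] .
  have "mat_fun f A ** mat_fun g A = U ** diag_mat (\<lambda>i. f (a i)) ** (transpose U ** U) ** diag_mat (\<lambda>i. g (a i)) ** transpose U"
    unfolding mat_fun_eq[OF u] by (simp add: matrix_mul_assoc)
  also have "\<dots> = U ** (diag_mat (\<lambda>i. f (a i)) ** diag_mat (\<lambda>i. g (a i))) ** transpose U"
    using orthD(1)[OF u(1)] by (simp add: matrix_mul_assoc)
  also have "diag_mat (\<lambda>i. f (a i)) ** diag_mat (\<lambda>i. g (a i)) = diag_mat (\<lambda>i. f (a i) * g (a i))"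
    unfolding diag_left by (simp add: diag_mat_def vec_eq_iff)
  finally show ?thesis unfolding mat_fun_eq[OF u] by simp
qed

lemma tendsto_mmult:
  fixes X Y :: "'a \<Rightarrow> real^'d^'d"
  assumes "(X \<longlongrightarrow> a) F" "(Y \<longlongrightarrow> b) F"
  shows "((\<lambda>t. X t ** Y t) \<longlongrightarrow> a ** b) F"
  unfolding matrix_matrix_mult_def by (intro tendsto_intros assms)

lemma tendsto_ev_eq:
  assumes "(X \<longlongrightarrow> L) F" "eventually (\<lambda>t. X t = Y t) F" "L = L'"
  shows "(Y \<longlongrightarrow> L') F"
  using tendsto_cong[OF assms(2)] assms(1,3) by simp

lemma poly_tendsto:
  fixes C :: "'a \<Rightarrow> real^'d^'d"
  assumes "real_polynomial_function p" and sB: "sym_mat B"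
    and ev: "eventually (\<lambda>t. sym_mat (C t)) F" and lim: "(C \<longlongrightarrow> B) F"
  shows "((\<lambda>t. mat_fun p (C t)) \<longlongrightarrow> mat_fun p B) F"
  using assms(1)
proof (induction p rule: real_polynomial_function.induct)
  case (linear f)
  then obtain c where f: "f = (\<lambda>x. x * c)" using real_bounded_linear by blast
  have e: "mat_fun (\<lambda>x. x * c) A = A ** (c *\<^sub>R mat 1)" if "sym_mat A" for A :: "real^'d^'d"
    using mf_mult[OF that, of "\<lambda>x. x" "\<lambda>x. c"] mf_id[OF that] mf_const[OF that] by simp
  have "((\<lambda>t. C t ** (c *\<^sub>R mat 1)) \<longlongrightarrow> B ** (c *\<^sub>R mat 1)) F"
    by (intro tendsto_mmult lim tendsto_const)
  moreover have "eventually (\<lambda>t. C t ** (c *\<^sub>R mat 1) = mat_fun (\<lambda>x. x * c) (C t)) F"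
    using ev by eventually_elim (simp add: e)
  ultimately show ?case unfolding f by (rule tendsto_ev_eq) (simp add: e[OF sB])
next
  case (const c)
  have "eventually (\<lambda>t. c *\<^sub>R mat 1 = mat_fun (\<lambda>x. c) (C t)) F"
    using ev by eventually_elim (simp add: mf_const)
  then show ?case by (rule tendsto_ev_eq[OF tendsto_const]) (simp add: mf_const[OF sB])
next
  case (add f g)
  have "((\<lambda>t. mat_fun f (C t) + mat_fun g (C t)) \<longlongrightarrow> mat_fun f B + mat_fun g B) F"
    by (intro tendsto_add add.IH)
  moreover have "eventually (\<lambda>t. mat_fun f (C t) + mat_fun g (C t) = mat_fun (\<lambda>x. f x + g x) (C t)) F"
    using ev by eventually_elim (simp add: mf_add)
  ultimately show ?case by (rule tendsto_ev_eq) (simp add: mf_add[OF sB])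
next
  case (mult f g)
  have "((\<lambda>t. mat_fun f (C t) ** mat_fun g (C t)) \<longlongrightarrow> mat_fun f B ** mat_fun g B) F"
    by (intro tendsto_mmult mult.IH)
  moreover have "eventually (\<lambda>t. mat_fun f (C t) ** mat_fun g (C t) = mat_fun (\<lambda>x. f x * g x) (C t)) F"
    using ev by eventually_elim (simp add: mf_mult)
  ultimately show ?case by (rule tendsto_ev_eq) (simp add: mf_mult[OF sB])
qed

lemma orth_col:
  fixes U :: "real^'d^'d"
  assumes "orthogonal_matrix U"
  shows "(\<Sum>i\<in>UNIV. U $ i $ k * U $ i $ l) = (if k = l then 1 else 0)"
proof -
  have "(transpose U ** U) $ k $ l = (mat 1 :: real^'d^'d) $ k $ l" using orthD(1)[OF assms] by simp
  thus ?thesis by (simp add: matrix_matrix_mult_def transpose_def mat_def)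
qed

lemma orth_row:
  fixes U :: "real^'d^'d"
  assumes "orthogonal_matrix U"
  shows "(\<Sum>k\<in>UNIV. U $ i $ k * U $ j $ k) = (if i = j then 1 else 0)"
proof -
  have "(U ** transpose U) $ i $ j = (mat 1 :: real^'d^'d) $ i $ j" using orthD(2)[OF assms] by simp
  thus ?thesis by (simp add: matrix_matrix_mult_def transpose_def mat_def)
qed

lemma orth_entry_le1:
  fixes U :: "real^'d^'d"
  assumes "orthogonal_matrix U"
  shows "\<bar>U $ i $ k\<bar> \<le> 1"
proof -
  have "U $ i $ k * U $ i $ k \<le> (\<Sum>i'\<in>UNIV. U $ i' $ k * U $ i' $ k)"
    by (rule member_le_sum) auto
  also have "\<dots> = 1" using orth_col[OF assms, of k k] by simp
  finally have "\<bar>U $ i $ k\<bar>^2 \<le> 1^2" by (simp add: power2_eq_square)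
  thus ?thesis by (rule power2_le_imp_le) simp
qed

lemma eig_col:
  fixes U :: "real^'d^'d"
  assumes o: "orthogonal_matrix U" and A: "A = U ** diag_mat a ** transpose U"
  shows "A *v column k U = a k *\<^sub>R column k U" "column k U \<bullet> column k U = 1"
proof -
  have "A ** U = U ** diag_mat a ** (transpose U ** U)" unfolding A by (simp add: matrix_mul_assoc)
  also have "\<dots> = U ** diag_mat a" using orthD(1)[OF o] by simp
  finally have AU: "A ** U = U ** diag_mat a" .
  have "(A *v column k U) $ i = (a k *\<^sub>R column k U) $ i" for i
  proof -
    have "(A *v column k U) $ i = (A ** U) $ i $ k"
      by (simp add: matrix_vector_mult_def matrix_matrix_mult_def column_def)
    also have "\<dots> = U $ i $ k * a k" unfolding AU diag_right by simp
    finally show ?thesis by (simp add: column_def)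
  qed
  thus "A *v column k U = a k *\<^sub>R column k U" by (simp add: vec_eq_iff)
  show "column k U \<bullet> column k U = 1" using orth_col[OF o, of k k] by (simp add: inner_vec_def column_def)
qed

lemma eig_val:
  fixes U :: "real^'d^'d"
  assumes o: "orthogonal_matrix U" and A: "A = U ** diag_mat a ** transpose U"
  shows "a k = column k U \<bullet> (A *v column k U)" "norm (column k U) = 1"
  using eig_col[OF o A, of k] by (simp_all add: norm_eq_sqrt_inner)

lemma quad_bound:
  fixes E :: "real^'d^'d"
  shows "\<bar>u \<bullet> (E *v u)\<bar> \<le> real CARD('d) * real CARD('d) * norm E * (norm u)^2"
proof -
  have ent: "\<bar>E $ i $ j\<bar> \<le> norm E" for i j
    by (rule order_trans[OF component_le_norm_cart[of "E $ i" j] Finite_Cartesian_Product.norm_nth_le])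
  have "\<bar>u \<bullet> (E *v u)\<bar> \<le> norm u * norm (E *v u)" by (rule Cauchy_Schwarz_ineq2)
  also have "norm (E *v u) \<le> onorm ((*v) E) * norm u" by (rule onorm) simp
  also have "onorm ((*v) E) \<le> real CARD('d) * real CARD('d) * norm E"
    by (rule onorm_le_matrix_component) (rule ent)
  finally show ?thesis
    by (simp add: power2_eq_square mult_left_mono mult_right_mono mult.assoc mult.left_commute)
qed

lemma quad_lower:
  fixes V :: "real^'d^'d"
  assumes o: "orthogonal_matrix V" and B: "B = V ** diag_mat b ** transpose V"
    and bm: "\<And>k. m \<le> b k" and u: "norm u = 1"
  shows "m \<le> u \<bullet> (B *v u)"
proof -
  define w where "w = transpose V *v u"
  have wv: "w = u v* V" unfolding w_def by simp
  have "u \<bullet> (B *v u) = u \<bullet> (V *v (diag_mat b *v w))"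
    unfolding B w_def by (simp only: matrix_vector_mul_assoc matrix_mul_assoc)
  also have "\<dots> = w \<bullet> (diag_mat b *v w)"
    unfolding wv by (simp only: dot_lmul_matrix)
  also have "\<dots> = (\<Sum>k\<in>UNIV. b k * (w $ k)^2)"
  proof -
    have "(diag_mat b *v w) $ k = b k * w $ k" for k
    proof -
      have "(diag_mat b *v w) $ k = (\<Sum>j\<in>UNIV. (if k = j then b k else 0) * w $ j)"
        by (simp add: matrix_vector_mult_def diag_mat_def)
      also have "\<dots> = b k * w $ k" by (rule sum_if_mult1)
      finally show ?thesis .
    qed
    thus ?thesis by (simp add: inner_vec_def power2_eq_square mult.commute mult.left_commute)
  qed
  finally have eq: "u \<bullet> (B *v u) = (\<Sum>k\<in>UNIV. b k * (w $ k)^2)" .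
  have "u \<bullet> ((V ** transpose V) *v u) = u \<bullet> (V *v (transpose V *v u))"
    by (simp only: matrix_vector_mul_assoc)
  also have "\<dots> = (u v* V) \<bullet> (transpose V *v u)" by (simp only: dot_lmul_matrix)
  also have "\<dots> = w \<bullet> w" by (simp add: wv)
  finally have "w \<bullet> w = u \<bullet> ((V ** transpose V) *v u)" ..
  also have "\<dots> = 1" using orthD(2)[OF o] u by (simp add: norm_eq_sqrt_inner)
  finally have ww: "(\<Sum>k\<in>UNIV. (w $ k)^2) = 1" by (simp add: inner_vec_def power2_eq_square)
  have "m = (\<Sum>k\<in>UNIV. m * (w $ k)^2)" using ww by (simp add: sum_distrib_left[symmetric])
  also have "\<dots> \<le> (\<Sum>k\<in>UNIV. b k * (w $ k)^2)" by (rule sum_mono) (simp add: bm mult_right_mono)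
  finally show ?thesis using eq by simp
qed

lemma mat_norm_le:
  fixes M :: "real^'d^'d"
  shows "norm M \<le> (\<Sum>i\<in>UNIV. \<Sum>j\<in>UNIV. \<bar>M $ i $ j\<bar>)"
proof -
  have "norm M \<le> (\<Sum>i\<in>UNIV. norm (M $ i))" unfolding norm_vec_def by (rule L2_set_le_sum) simp
  also have "\<dots> \<le> (\<Sum>i\<in>UNIV. \<Sum>j\<in>UNIV. \<bar>M $ i $ j\<bar>)" by (rule sum_mono) (rule norm_le_l1_cart)
  finally show ?thesis .
qed

lemma mf_diff_bound:
  fixes U :: "real^'d^'d"
  assumes o: "orthogonal_matrix U" and A: "A = U ** diag_mat a ** transpose U"
    and b: "\<And>k. \<bar>g (a k) - p (a k)\<bar> \<le> eps"
  shows "norm (mat_fun g A - mat_fun p A) \<le> real CARD('d) ^ 3 * eps"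
proof -
  have ent: "(mat_fun g A - mat_fun p A) $ i $ j = (\<Sum>k\<in>UNIV. U $ i $ k * (g (a k) - p (a k)) * U $ j $ k)" for i j
    unfolding mat_fun_eq[OF o A] by (simp add: ent_diag sum_subtractf[symmetric] algebra_simps)
  have eb: "\<bar>(mat_fun g A - mat_fun p A) $ i $ j\<bar> \<le> real CARD('d) * eps" for i j
  proof -
    have "\<bar>(mat_fun g A - mat_fun p A) $ i $ j\<bar> \<le> (\<Sum>k\<in>UNIV. \<bar>U $ i $ k * (g (a k) - p (a k)) * U $ j $ k\<bar>)"
      unfolding ent by (rule sum_abs)
    also have "\<dots> \<le> (\<Sum>k\<in>(UNIV::'d set). eps)"
    proof (rule sum_mono)
      fix k
      have "\<bar>U $ i $ k * (g (a k) - p (a k)) * U $ j $ k\<bar> = \<bar>U $ i $ k\<bar> * \<bar>g (a k) - p (a k)\<bar> * \<bar>U $ j $ k\<bar>"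
        by (simp add: abs_mult)
      also have "\<dots> \<le> 1 * eps * 1"
        using abs_ge_zero[of "g (a k) - p (a k)"] b[of k] by (intro mult_mono orth_entry_le1[OF o] b) auto
      finally show "\<bar>U $ i $ k * (g (a k) - p (a k)) * U $ j $ k\<bar> \<le> eps" by simp
    qed
    finally show ?thesis by simp
  qed
  have "norm (mat_fun g A - mat_fun p A) \<le> (\<Sum>i\<in>UNIV. \<Sum>j\<in>UNIV. \<bar>(mat_fun g A - mat_fun p A) $ i $ j\<bar>)"
    by (rule mat_norm_le)
  also have "\<dots> \<le> (\<Sum>i\<in>(UNIV::'d set). \<Sum>j\<in>(UNIV::'d set). real CARD('d) * eps)"
    by (intro sum_mono eb)
  also have "\<dots> = real CARD('d) ^ 3 * eps" by (simp add: power3_eq_cube)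
  finally show ?thesis .
qed

lemma eig_in_range:
  fixes U V :: "real^'d^'d"
  assumes oU: "orthogonal_matrix U" and A: "A = U ** diag_mat a ** transpose U"
    and oV: "orthogonal_matrix V" and B: "B = V ** diag_mat b ** transpose V"
    and bm: "\<And>k. m \<le> b k"
    and close: "real CARD('d) * real CARD('d) * norm (A - B) < m / 2"
  shows "m / 2 < a k" "a k \<le> real CARD('d) * real CARD('d) * norm B + m"
proof -
  define c where "c = real CARD('d) * real CARD('d)"
  define u where "u = column k U"
  have ak: "a k = u \<bullet> (A *v u)" and nu: "norm u = 1" using eig_val[OF oU A, of k] u_def by auto
  have split: "u \<bullet> (A *v u) = u \<bullet> (B *v u) + u \<bullet> ((A - B) *v u)"
    by (simp add: matrix_vector_mult_diff_rdistrib inner_diff_right)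
  have e1: "\<bar>u \<bullet> ((A - B) *v u)\<bar> < m / 2" using quad_bound[of u "A - B"] nu close by simp
  have e2: "m \<le> u \<bullet> (B *v u)" by (rule quad_lower[OF oV B bm nu])
  have e3: "u \<bullet> (B *v u) \<le> real CARD('d) * real CARD('d) * norm B" using quad_bound[of u B] nu by simp
  show "m / 2 < a k" using ak split e1 e2 by linarith
  show "a k \<le> real CARD('d) * real CARD('d) * norm B + m" using ak split e1 e3 by linarith
qed

lemma mf_tendsto:
  fixes C :: "'a \<Rightarrow> real^'d^'d"
  assumes pd: "pos_def B" and g: "continuous_on {0<..} g"
    and ev: "eventually (\<lambda>t. sym_mat (C t)) F" and lim: "(C \<longlongrightarrow> B) F"
  shows "((\<lambda>t. mat_fun g (C t)) \<longlongrightarrow> mat_fun g B) F"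
proof -
  have sB: "sym_mat B" using pd by (simp add: pos_def_def)
  obtain V b where oV: "orthogonal_matrix V" and B: "B = V ** diag_mat b ** transpose V"
    using decomp[OF sB] .
  have bpos: "b k > 0" for k
  proof -
    have bk: "b k = column k V \<bullet> (B *v column k V)" and "norm (column k V) = 1" using eig_val[OF oV B] by auto
    hence "column k V \<noteq> 0" by auto
    hence "0 < column k V \<bullet> (B *v column k V)" using pd unfolding pos_def_def by blast
    thus ?thesis using bk by simp
  qed
  define m where "m = Min (range b)"
  have bm: "m \<le> b k" for k unfolding m_def by simp
  have mpos: "m > 0" unfolding m_def using bpos by (simp add: Min_gr_iff)
  define c where "c = real CARD('d) * real CARD('d)"
  have cpos: "c > 0" unfolding c_def by simp
  define K where "K = {m / 2 .. c * norm B + m}"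
  have cK: "compact K" unfolding K_def by simp
  have gK: "continuous_on K g" by (rule continuous_on_subset[OF g]) (use mpos in \<open>auto simp: K_def\<close>)
  define N where "N = real CARD('d) ^ 3"
  have Npos: "N > 0" unfolding N_def by simp
  show ?thesis
  proof (rule tendstoI)
    fix e :: real assume e: "e > 0"
    define eps where "eps = e / (4 * N)"
    have epos: "eps > 0" unfolding eps_def using e Npos by simp
    obtain p where p: "real_polynomial_function p" "\<And>x. x \<in> K \<Longrightarrow> \<bar>g x - p x\<bar> < eps"
      using Stone_Weierstrass_real_polynomial_function[OF cK gK epos] by blast
    have bnd: "norm (mat_fun g A - mat_fun p A) \<le> N * eps" if sA: "sym_mat A" and cl: "c * norm (A - B) < m / 2" for A
    proof -
      obtain U a where oU: "orthogonal_matrix U" and A: "A = U ** diag_mat a ** transpose U"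
        using decomp[OF sA] .
      have "a k \<in> K" for k using eig_in_range[OF oU A oV B bm, of k] cl unfolding K_def c_def by auto
      hence "\<bar>g (a k) - p (a k)\<bar> \<le> eps" for k using p(2) less_imp_le by blast
      thus ?thesis using mf_diff_bound[OF oU A] unfolding N_def by blast
    qed
    have Ne: "N * eps = e / 4" unfolding eps_def using Npos by simp
    have ev1: "eventually (\<lambda>t. c * norm (C t - B) < m / 2) F"
    proof -
      have "eventually (\<lambda>t. dist (C t) B < m / (2 * c)) F" using tendstoD[OF lim] mpos cpos by simp
      thus ?thesis
      proof eventually_elim
        case (elim t)
        hence "norm (C t - B) < m / (2 * c)" by (simp add: dist_norm)
        hence "c * norm (C t - B) < c * (m / (2 * c))" by (rule mult_strict_left_mono[OF _ cpos])
        also have "c * (m / (2 * c)) = m / 2" using cpos by simp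
        finally show ?case .
      qed
    qed
    have ev2: "eventually (\<lambda>t. dist (mat_fun p (C t)) (mat_fun p B) < e / 2) F"
      using tendstoD[OF poly_tendsto[OF p(1) sB ev lim], of "e / 2"] e by simp
    have bB: "norm (mat_fun g B - mat_fun p B) \<le> N * eps" using bnd[OF sB] mpos by simp
    show "eventually (\<lambda>t. dist (mat_fun g (C t)) (mat_fun g B) < e) F"
      using ev ev1 ev2
    proof eventually_elim
      case (elim t)
      have "dist (mat_fun g (C t)) (mat_fun g B) \<le> dist (mat_fun g (C t)) (mat_fun p (C t)) + dist (mat_fun p (C t)) (mat_fun g B)"
        by (rule dist_triangle)
      also have "dist (mat_fun p (C t)) (mat_fun g B) \<le> dist (mat_fun p (C t)) (mat_fun p B) + dist (mat_fun p B) (mat_fun g B)"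
        by (rule dist_triangle)
      also have "dist (mat_fun g (C t)) (mat_fun p (C t)) \<le> N * eps" using bnd[OF elim(1,2)] by (simp add: dist_norm)
      also have "dist (mat_fun p B) (mat_fun g B) \<le> N * eps" using bB by (simp add: dist_norm norm_minus_commute)
      finally show ?case using elim(3) Ne by linarith
    qed
  qed
qed

lemma vd_dq:
  fixes \<phi> :: "real \<Rightarrow> 'a::real_normed_vector"
  shows "(\<phi> has_vector_derivative L) (at 0) \<longleftrightarrow> ((\<lambda>t. (\<phi> t - \<phi> 0) /\<^sub>R t) \<longlongrightarrow> L) (at 0)"
proof -
  have ev: "eventually (\<lambda>y. norm (\<phi> y - \<phi> 0 - (y - 0) *\<^sub>R L) / norm (y - 0) = norm ((\<phi> y - \<phi> 0) /\<^sub>R y - L)) (at (0::real))"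
  proof -
    have "eventually (\<lambda>y::real. y \<noteq> 0) (at 0)" unfolding eventually_at by (rule exI[of _ 1]) auto
    thus ?thesis
    proof eventually_elim
      case (elim y)
      have "(\<phi> y - \<phi> 0) /\<^sub>R y - L = (1 / y) *\<^sub>R (\<phi> y - \<phi> 0 - y *\<^sub>R L)"
        using elim by (simp add: scaleR_diff_right inverse_eq_divide)
      hence "norm ((\<phi> y - \<phi> 0) /\<^sub>R y - L) = norm (\<phi> y - \<phi> 0 - y *\<^sub>R L) / \<bar>y\<bar>" by simp
      thus ?case by simp
    qed
  qed
  have "(\<phi> has_vector_derivative L) (at 0) \<longleftrightarrow>
      ((\<lambda>y. norm (\<phi> y - \<phi> 0 - (y - 0) *\<^sub>R L) / norm (y - 0)) \<longlongrightarrow> 0) (at 0)"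
    unfolding has_vector_derivative_def has_derivative_iff_norm by (simp add: bounded_linear_scaleR_left)
  also have "\<dots> \<longleftrightarrow> ((\<lambda>y. norm ((\<phi> y - \<phi> 0) /\<^sub>R y - L)) \<longlongrightarrow> 0) (at 0)" by (rule tendsto_cong[OF ev])
  also have "\<dots> \<longleftrightarrow> ((\<lambda>y. (\<phi> y - \<phi> 0) /\<^sub>R y - L) \<longlongrightarrow> 0) (at 0)" by (rule tendsto_norm_zero_iff)
  also have "\<dots> \<longleftrightarrow> ((\<lambda>t. (\<phi> t - \<phi> 0) /\<^sub>R t) \<longlongrightarrow> L) (at 0)" by (rule LIM_zero_iff)
  finally show ?thesis .
qed

definition Emat :: "'d::finite \<Rightarrow> real^'d^'d" where
  "Emat j = diag_mat (\<lambda>k. if k = j then 1 else 0)"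

lemma madd_r: fixes A B :: "real^'n^'m" shows "(A + B) ** C = A ** C + B ** C"
  by (simp add: matrix_matrix_mult_def vec_eq_iff distrib_right sum.distrib)

lemma msub_l: "(A::real^'d^'d) ** (B - C) = A ** B - A ** C"
  by (simp add: matrix_matrix_mult_def vec_eq_iff right_diff_distrib sum_subtractf)

lemma msub_r: "((A::real^'d^'d) - B) ** C = A ** C - B ** C"
  by (simp add: matrix_matrix_mult_def vec_eq_iff left_diff_distrib sum_subtractf)

lemma msum_left: "(\<Sum>j\<in>S. M j) ** (X::real^'d^'d) = (\<Sum>j\<in>S. M j ** X)"
  by (induction S rule: infinite_finite_induct) (simp_all add: madd_r)

lemma msum_right: "(X::real^'d^'d) ** (\<Sum>j\<in>S. M j) = (\<Sum>j\<in>S. X ** M j)"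
  by (induction S rule: infinite_finite_induct) (simp_all add: matrix_add_ldistrib)

lemma orth_cancel_r: "orthogonal_matrix V \<Longrightarrow> X ** transpose V ** V = X"
  by (simp add: matrix_mul_assoc[symmetric] orthD)

lemma orth_cancel_l: "orthogonal_matrix V \<Longrightarrow> transpose V ** V ** X = X"
  by (simp add: orthD)

lemma orth_cancel_r2: "orthogonal_matrix V \<Longrightarrow> X ** V ** transpose V = X"
  by (simp add: matrix_mul_assoc[symmetric] orthD)

lemma mcancel:
  fixes U V X Y :: "real^'d^'d"
  assumes oU: "orthogonal_matrix U" and oV: "orthogonal_matrix V"
    and eq: "transpose U ** X ** V = transpose U ** Y ** V"
  shows "X = Y"
proof -
  have "X = U ** (transpose U ** X ** V) ** transpose V"
    using oU oV by (simp add: matrix_mul_assoc orth_cancel_r2 orthD)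
  also have "\<dots> = U ** (transpose U ** Y ** V) ** transpose V" using eq by simp
  also have "\<dots> = Y" using oU oV by (simp add: matrix_mul_assoc orth_cancel_r2 orthD)
  finally show ?thesis .
qed

lemma key_ident:
  fixes A B V :: "real^'d^'d"
  assumes fd: "\<And>a b. f a - f b = d a b * (a - b)"
    and sA: "sym_mat A" and oV: "orthogonal_matrix V" and B: "B = V ** diag_mat b ** transpose V"
  shows "mat_fun f A - mat_fun f B =
     (\<Sum>j\<in>UNIV. mat_fun (\<lambda>x. d x (b j)) A ** (A - B) ** (V ** Emat j ** transpose V))"
proof -
  obtain U a where oU: "orthogonal_matrix U" and A: "A = U ** diag_mat a ** transpose U"
    using decomp[OF sA] .
  define W where "W = transpose U ** V"
  have L1: "transpose U ** mat_fun f A ** V = diag_mat (\<lambda>i. f (a i)) ** W"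
    unfolding mat_fun_eq[OF oU A] W_def using oU by (simp add: matrix_mul_assoc orthD)
  have L2: "transpose U ** mat_fun f B ** V = W ** diag_mat (\<lambda>i. f (b i))"
    unfolding mat_fun_eq[OF oV B] W_def using oV by (simp add: matrix_mul_assoc orth_cancel_r)
  have AB: "transpose U ** (A - B) ** V = diag_mat a ** W - W ** diag_mat b"
  proof -
    have "transpose U ** A ** V = diag_mat a ** W"
      unfolding A W_def using oU by (simp add: matrix_mul_assoc orthD)
    moreover have "transpose U ** B ** V = W ** diag_mat b"
      unfolding B W_def using oV by (simp add: matrix_mul_assoc orth_cancel_r)
    ultimately show ?thesis by (simp add: msub_l msub_r)
  qed
  have R1: "transpose U ** (mat_fun (\<lambda>x. d x (b j)) A ** (A - B) ** (V ** Emat j ** transpose V)) ** V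
     = diag_mat (\<lambda>i. d (a i) (b j)) ** (transpose U ** (A - B) ** V) ** Emat j" for j
    unfolding mat_fun_eq[OF oU A] using oU oV by (simp add: matrix_mul_assoc orthD orth_cancel_r)
  show ?thesis
  proof (rule mcancel[OF oU oV])
    have "(transpose U ** (mat_fun f A - mat_fun f B) ** V) $ i $ l = (f (a i) - f (b l)) * W $ i $ l" for i l
      unfolding msub_l msub_r L1 L2 by (simp add: diag_left diag_right algebra_simps)
    moreover have "(transpose U ** (\<Sum>j\<in>UNIV. mat_fun (\<lambda>x. d x (b j)) A ** (A - B) ** (V ** Emat j ** transpose V)) ** V) $ i $ l
        = (f (a i) - f (b l)) * W $ i $ l" for i l
    proof -
      have "(transpose U ** (\<Sum>j\<in>UNIV. mat_fun (\<lambda>x. d x (b j)) A ** (A - B) ** (V ** Emat j ** transpose V)) ** V) $ i $ l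
         = (\<Sum>j\<in>UNIV. (diag_mat (\<lambda>i. d (a i) (b j)) ** (diag_mat a ** W - W ** diag_mat b) ** Emat j) $ i $ l)"
        unfolding msum_left msum_right R1 AB by simp
      also have "\<dots> = (\<Sum>j\<in>UNIV. if l = j then d (a i) (b l) * ((a i - b l) * W $ i $ l) else 0)"
        unfolding Emat_def diag_left diag_right by (intro sum.cong) (auto simp: algebra_simps)
      also have "\<dots> = (f (a i) - f (b l)) * W $ i $ l" by (simp add: fd)
      finally show ?thesis .
    qed
    ultimately show "transpose U ** (mat_fun f A - mat_fun f B) ** V =
      transpose U ** (\<Sum>j\<in>UNIV. mat_fun (\<lambda>x. d x (b j)) A ** (A - B) ** (V ** Emat j ** transpose V)) ** V"
      by (simp add: vec_eq_iff)
  qed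
qed

definition ddp :: "real \<Rightarrow> real \<Rightarrow> real \<Rightarrow> real" where
  "ddp r a b = (if a = b then r * a powr (r - 1) else (a powr r - b powr r) / (a - b))"

lemma ddp_fd: "a powr r - b powr r = ddp r a b * (a - b)"
  by (simp add: ddp_def)

lemma ddp_cont:
  assumes b: "b > 0"
  shows "continuous_on {0<..} (\<lambda>a. ddp r a b)"
proof -
  have "isCont (\<lambda>a. ddp r a b) a" if a: "a > 0" for a
  proof (cases "a = b")
    case False
    have ev: "eventually (\<lambda>y. (y powr r - b powr r) / (y - b) = ddp r y b) (nhds a)"
      unfolding eventually_nhds
      by (rule exI[of _ "- {b}"]) (use False in \<open>auto simp: ddp_def open_Compl\<close>)
    have "isCont (\<lambda>y. y powr r) a" using has_real_derivative_powr[OF a] by (rule DERIV_isCont)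
    hence "isCont (\<lambda>y. (y powr r - b powr r) / (y - b)) a" using False a
      by (intro continuous_intros) auto
    thus ?thesis using isCont_cong[OF ev] by simp
  next
    case True
    have "((\<lambda>y. (y powr r - b powr r) / (y - b)) \<longlongrightarrow> r * b powr (r - 1)) (at b)"
      using has_real_derivative_powr[OF b, of r] unfolding has_field_derivative_iff by simp
    moreover have "eventually (\<lambda>y. (y powr r - b powr r) / (y - b) = ddp r y b) (at b)"
      unfolding eventually_at by (rule exI[of _ 1]) (auto simp: ddp_def)
    ultimately have "((\<lambda>y. ddp r y b) \<longlongrightarrow> ddp r b b) (at b)"
      by (rule tendsto_ev_eq) (simp add: ddp_def)
    thus ?thesis using True by (simp add: isCont_def)
  qed
  thus ?thesis by (subst continuous_on_eq_continuous_at) auto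
qed

lemma smul_l: "(c *\<^sub>R (A::real^'n^'m)) ** B = c *\<^sub>R (A ** B)"
  by (simp add: scalar_matrix_assoc)

lemma smul_r: "(A::real^'n^'m) ** (c *\<^sub>R B) = c *\<^sub>R (A ** B)"
  by (simp add: matrix_matrix_mult_def vec_eq_iff sum_distrib_left mult.left_commute)

lemma partial_mf:
  fixes B :: "real^'n \<Rightarrow> real^'d^'d" and V :: "real^'d^'d"
  assumes oO: "open \<Omega>" and x: "x \<in> \<Omega>" and pd: "\<forall>y\<in>\<Omega>. pos_def (B y)"
    and dB: "B differentiable (at x)"
    and fd: "\<And>a b. f a - f b = dd a b * (a - b)"
    and dc: "\<And>b. b > 0 \<Longrightarrow> continuous_on {0<..} (\<lambda>a. dd a b)"
    and oV: "orthogonal_matrix V" and Bx: "B x = V ** diag_mat bb ** transpose V"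
  shows "partial k (\<lambda>y. mat_fun f (B y)) x =
     (\<Sum>j\<in>UNIV. mat_fun (\<lambda>a. dd a (bb j)) (B x) ** partial k B x ** (V ** Emat j ** transpose V))"
proof -
  define \<gamma> where "\<gamma> t = B (x + t *\<^sub>R axis k 1)" for t
  define D where "D = partial k B x"
  have pdx: "pos_def (B x)" using pd x by simp
  have bpos: "bb j > 0" for j
  proof -
    have bk: "bb j = column j V \<bullet> (B x *v column j V)" and "norm (column j V) = 1" using eig_val[OF oV Bx] by auto
    hence "column j V \<noteq> 0" by auto
    hence "0 < column j V \<bullet> (B x *v column j V)" using pdx unfolding pos_def_def by blast
    thus ?thesis using bk by simp
  qed
  have g0: "\<gamma> 0 = B x" unfolding \<gamma>_def by simp
  have ldiff: "(\<lambda>t. x + t *\<^sub>R axis k 1) differentiable (at (0::real))"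
    by (intro derivative_intros)
  have "(B \<circ> (\<lambda>t. x + t *\<^sub>R axis k 1)) differentiable (at 0)"
    by (rule differentiable_chain_at[OF ldiff]) (simp add: dB)
  hence gdiff: "\<gamma> differentiable (at 0)" unfolding \<gamma>_def o_def .
  hence "(\<gamma> has_vector_derivative D) (at 0)"
    unfolding D_def partial_def \<gamma>_def[abs_def] by (simp add: vector_derivative_works[symmetric])
  hence dq: "((\<lambda>t. (\<gamma> t - B x) /\<^sub>R t) \<longlongrightarrow> D) (at 0)" using vd_dq[of \<gamma> D] g0 by simp
  have gcont: "(\<gamma> \<longlongrightarrow> B x) (at 0)"
    using differentiable_imp_continuous_within[OF gdiff] g0 by (simp add: continuous_at)
  have "continuous (at (0::real)) (\<lambda>t. x + t *\<^sub>R axis k 1)" by (intro continuous_intros)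
  hence "((\<lambda>t. x + t *\<^sub>R axis k 1) \<longlongrightarrow> x) (at (0::real))" by (simp add: continuous_at)
  hence "eventually (\<lambda>t. x + t *\<^sub>R axis k 1 \<in> \<Omega>) (at (0::real))"
    using topological_tendstoD[OF _ oO x] by blast
  hence evs: "eventually (\<lambda>t. sym_mat (\<gamma> t)) (at 0)"
    by eventually_elim (use pd in \<open>auto simp: \<gamma>_def pos_def_def\<close>)
  define L where "L = (\<Sum>j\<in>UNIV. mat_fun (\<lambda>a. dd a (bb j)) (B x) ** D ** (V ** Emat j ** transpose V))"
  have lim: "((\<lambda>t. (\<Sum>j\<in>UNIV. mat_fun (\<lambda>a. dd a (bb j)) (\<gamma> t) ** ((\<gamma> t - B x) /\<^sub>R t) ** (V ** Emat j ** transpose V))) \<longlongrightarrow> L) (at 0)"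
    unfolding L_def
    by (intro tendsto_sum tendsto_mmult tendsto_const dq mf_tendsto[OF pdx dc[OF bpos] evs gcont])
  have evq: "eventually (\<lambda>t. (\<Sum>j\<in>UNIV. mat_fun (\<lambda>a. dd a (bb j)) (\<gamma> t) ** ((\<gamma> t - B x) /\<^sub>R t) ** (V ** Emat j ** transpose V))
      = (mat_fun f (\<gamma> t) - mat_fun f (\<gamma> 0)) /\<^sub>R t) (at 0)"
    using evs
  proof eventually_elim
    case (elim t)
    have "(mat_fun f (\<gamma> t) - mat_fun f (\<gamma> 0)) /\<^sub>R t =
        (1 / t) *\<^sub>R (\<Sum>j\<in>UNIV. mat_fun (\<lambda>a. dd a (bb j)) (\<gamma> t) ** (\<gamma> t - B x) ** (V ** Emat j ** transpose V))"
      unfolding g0 key_ident[OF fd elim oV Bx] by (simp add: inverse_eq_divide)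
    also have "\<dots> = (\<Sum>j\<in>UNIV. mat_fun (\<lambda>a. dd a (bb j)) (\<gamma> t) ** ((\<gamma> t - B x) /\<^sub>R t) ** (V ** Emat j ** transpose V))"
      by (simp add: scaleR_sum_right smul_l smul_r inverse_eq_divide)
    finally show ?case by simp
  qed
  have "((\<lambda>t. mat_fun f (\<gamma> t)) has_vector_derivative L) (at 0)"
    unfolding vd_dq using tendsto_ev_eq[OF lim evq refl] .
  hence "vector_derivative (\<lambda>t. mat_fun f (\<gamma> t)) (at 0) = L" by (rule vector_derivative_at)
  thus ?thesis unfolding partial_def \<gamma>_def L_def D_def .
qed

lemma frob_trace: "(A::real^'d^'d) \<cdot>\<^sub>F B = trace (transpose A ** B)"
proof -
  have "trace (transpose A ** B) = (\<Sum>i\<in>UNIV. \<Sum>k\<in>UNIV. A $ k $ i * B $ k $ i)"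
    by (simp add: trace_def matrix_matrix_mult_def transpose_def)
  also have "\<dots> = (\<Sum>k\<in>UNIV. \<Sum>i\<in>UNIV. A $ k $ i * B $ k $ i)" by (rule sum.swap)
  finally show ?thesis by (simp add: frob_def)
qed

lemma frob_conj:
  fixes V X Y :: "real^'d^'d"
  assumes oV: "orthogonal_matrix V"
  shows "(transpose V ** X ** V) \<cdot>\<^sub>F (transpose V ** Y ** V) = X \<cdot>\<^sub>F Y"
proof -
  have t1: "transpose (transpose V ** X ** V) = transpose V ** transpose X ** V"
    by (simp only: matrix_transpose_mul transpose_transpose matrix_mul_assoc)
  have t2: "(transpose V ** transpose X ** V) ** (transpose V ** Y ** V) = transpose V ** (transpose X ** Y ** V)"
    by (simp only: matrix_mul_assoc orth_cancel_r2[OF oV])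
  have "(transpose V ** X ** V) \<cdot>\<^sub>F (transpose V ** Y ** V) = trace (transpose V ** (transpose X ** Y ** V))"
    unfolding frob_trace t1 t2 ..
  also have "\<dots> = trace ((transpose X ** Y ** V) ** transpose V)" by (rule trace_mul_sym)
  also have "(transpose X ** Y ** V) ** transpose V = transpose X ** Y" by (rule orth_cancel_r2[OF oV])
  finally show ?thesis unfolding frob_trace .
qed

lemma conj_formula:
  fixes V D :: "real^'d^'d"
  assumes oV: "orthogonal_matrix V" and Bx: "Bx = V ** diag_mat b ** transpose V"
  shows "transpose V ** (\<Sum>j\<in>UNIV. mat_fun (\<lambda>a. dd a (b j)) Bx ** D ** (V ** Emat j ** transpose V)) ** V
     = (\<chi> i l. dd (b i) (b l) * (transpose V ** D ** V) $ i $ l)"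
proof -
  have R1: "transpose V ** (mat_fun (\<lambda>a. dd a (b j)) Bx ** D ** (V ** Emat j ** transpose V)) ** V
     = diag_mat (\<lambda>i. dd (b i) (b j)) ** (transpose V ** D ** V) ** Emat j" for j
    unfolding mat_fun_eq[OF oV Bx] using oV by (simp add: matrix_mul_assoc orthD orth_cancel_r)
  have "(transpose V ** (\<Sum>j\<in>UNIV. mat_fun (\<lambda>a. dd a (b j)) Bx ** D ** (V ** Emat j ** transpose V)) ** V) $ i $ l
      = dd (b i) (b l) * (transpose V ** D ** V) $ i $ l" for i l
  proof -
    have "(transpose V ** (\<Sum>j\<in>UNIV. mat_fun (\<lambda>a. dd a (b j)) Bx ** D ** (V ** Emat j ** transpose V)) ** V) $ i $ l
       = (\<Sum>j\<in>UNIV. (diag_mat (\<lambda>i. dd (b i) (b j)) ** (transpose V ** D ** V) ** Emat j) $ i $ l)"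
      unfolding msum_left msum_right R1 by simp
    also have "\<dots> = (\<Sum>j\<in>UNIV. if l = j then dd (b i) (b l) * (transpose V ** D ** V) $ i $ l else 0)"
      unfolding Emat_def diag_left diag_right by (intro sum.cong) auto
    also have "\<dots> = dd (b i) (b l) * (transpose V ** D ** V) $ i $ l" by simp
    finally show ?thesis .
  qed
  thus ?thesis by (simp add: vec_eq_iff)
qed

lemma powr_sinh:
  fixes a b t :: real
  assumes a: "a > 0" and b: "b > 0"
  shows "a powr t - b powr t = 2 * exp (t * ((ln a + ln b) / 2)) * sinh (t * ((ln a - ln b) / 2))"
proof -
  define \<mu> where "\<mu> = (ln a + ln b) / 2"
  define z where "z = (ln a - ln b) / 2"
  have 1: "a powr t = exp (t * \<mu>) * exp (t * z)"
  proof -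
    have "a powr t = exp (t * ln a)" using a unfolding powr_def by simp
    moreover have "t * ln a = t * \<mu> + t * z" unfolding \<mu>_def z_def by (simp add: field_simps)
    ultimately show ?thesis by (simp only: exp_add)
  qed
  have 2: "b powr t = exp (t * \<mu>) * exp (- (t * z))"
  proof -
    have "b powr t = exp (t * ln b)" using b unfolding powr_def by simp
    moreover have "t * ln b = t * \<mu> + - (t * z)" unfolding \<mu>_def z_def by (simp add: field_simps)
    ultimately show ?thesis by (simp only: exp_add)
  qed
  have "a powr t - b powr t = 2 * exp (t * \<mu>) * ((exp (t * z) - exp (- (t * z))) / 2)"
    unfolding 1 2 by (simp add: field_simps)
  also have "\<dots> = 2 * exp (t * \<mu>) * sinh (t * z)" by (simp only: sinh_field_def)
  finally show ?thesis unfolding \<mu>_def z_def .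
qed

lemma alg_true0: "(q::real) \<noteq> 0 \<Longrightarrow> 4 * r / q * (q / 4 * P) = r * P"
  by (simp add: field_simps)

lemma alg_true: "(r::real) + 1 \<noteq> 0 \<Longrightarrow> 4 * r / (r + 1)^2 * (((r + 1) / 2)^2 * P) = r * P"
proof -
  assume "r + 1 \<noteq> 0"
  hence h: "(r + 1)^2 \<noteq> 0" by simp
  have e: "((r + 1) / 2)^2 = (r + 1)^2 / 4" by (simp add: power_divide)
  show ?thesis unfolding e by (rule alg_true0[OF h])
qed

lemma alg_f1: "(h::real) \<noteq> 0 \<Longrightarrow> d \<noteq> 0 \<Longrightarrow> p * q / h^2 * (2 * e * h / d)^2 = p * q * (4 * (e * e)) / d^2"
  by (simp add: field_simps power2_eq_square)

lemma alg_f2: "(p::real) * q * (4 * (e1 * e2)) / d^2 = (2 * e1 * p) * (2 * e2 * q) / d^2"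
  by (simp add: algebra_simps)

lemma alg_f3: "(d::real) \<noteq> 0 \<Longrightarrow> X * d / d^2 = X / d"
  by (simp add: power2_eq_square)

lemma scalar_id:
  fixes a b r :: real
  assumes a: "a > 0" and b: "b > 0" and r: "r \<noteq> -1"
  shows "ddp r a b = sinh_ratio r ((ln a - ln b) / 2) * (ddp ((r + 1) / 2) a b)^2"
proof (cases "a = b")
  case True
  have r1: "r + 1 \<noteq> 0" using r by simp
  have ex: "((r + 1) / 2 - 1) + ((r + 1) / 2 - 1) = r - 1" by (simp add: field_simps)
  have "(a powr ((r + 1) / 2 - 1))^2 = a powr (((r + 1) / 2 - 1) + ((r + 1) / 2 - 1))"
    by (simp only: power2_eq_square powr_add)
  also have "\<dots> = a powr (r - 1)" unfolding ex ..
  finally have pw: "(a powr ((r + 1) / 2 - 1))^2 = a powr (r - 1)" .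
  have S: "sinh_ratio r ((ln a - ln b) / 2) = 4 * r / (r + 1)^2" using True by (simp add: sinh_ratio_def)
  have "ddp ((r + 1) / 2) a b = (r + 1) / 2 * a powr ((r + 1) / 2 - 1)" using True by (simp add: ddp_def)
  hence D: "(ddp ((r + 1) / 2) a b)^2 = ((r + 1) / 2)^2 * a powr (r - 1)"
    using pw by (simp only: power_mult_distrib)
  have Dr: "ddp r a b = r * a powr (r - 1)" using True by (simp add: ddp_def)
  show ?thesis unfolding S D Dr using alg_true[OF r1] by simp
next
  case False
  define s where "s = (r + 1) / 2"
  define \<mu> where "\<mu> = (ln a + ln b) / 2"
  define z where "z = (ln a - ln b) / 2"
  have z0: "z \<noteq> 0" unfolding z_def using False a b by simp
  have s0: "s \<noteq> 0" unfolding s_def using r by simp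
  have hs: "sinh (s * z) \<noteq> 0" using s0 z0 by simp
  have Xt: "a powr t - b powr t = 2 * exp (t * \<mu>) * sinh (t * z)" for t
    unfolding \<mu>_def z_def by (rule powr_sinh[OF a b])
  have X1: "a - b = 2 * exp \<mu> * sinh z" using Xt[of 1] a b by simp
  have ab: "a - b \<noteq> 0" using False by simp
  have e2: "exp (s * \<mu>) * exp (s * \<mu>) = exp (r * \<mu>) * exp \<mu>"
  proof -
    have "s * \<mu> + s * \<mu> = r * \<mu> + \<mu>" unfolding s_def by (simp add: field_simps)
    hence "exp (s * \<mu> + s * \<mu>) = exp (r * \<mu> + \<mu>)" by simp
    thus ?thesis by (simp only: exp_add)
  qed
  have SR: "sinh_ratio r z = sinh (r * z) * sinh z / (sinh (s * z))^2"
    using z0 unfolding sinh_ratio_def s_def by simp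
  have Ds: "ddp s a b = 2 * exp (s * \<mu>) * sinh (s * z) / (a - b)"
    using False unfolding ddp_def Xt[of s] by simp
  have Dr: "ddp r a b = 2 * exp (r * \<mu>) * sinh (r * z) / (a - b)"
    using False unfolding ddp_def Xt[of r] by simp
  have "sinh_ratio r z * (ddp s a b)^2 =
      sinh (r * z) * sinh z * (4 * (exp (s * \<mu>) * exp (s * \<mu>))) / (a - b)^2"
    unfolding SR Ds by (rule alg_f1[OF hs ab])
  also have "\<dots> = (2 * exp (r * \<mu>) * sinh (r * z)) * (2 * exp \<mu> * sinh z) / (a - b)^2"
    unfolding e2 by (rule alg_f2)
  also have "\<dots> = (2 * exp (r * \<mu>) * sinh (r * z)) * (a - b) / (a - b)^2"
    unfolding X1[symmetric] ..
  also have "\<dots> = ddp r a b" unfolding Dr by (rule alg_f3[OF ab])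
  finally show ?thesis unfolding s_def z_def by simp
qed

theorem mainTheorem11:
  fixes \<Omega> :: "(real ^ 'n) set" and B :: "real ^ 'n \<Rightarrow> real ^ 'd ^ 'd" and r :: real
  assumes "open \<Omega>"
    and "smooth_on \<Omega> B"
    and "\<forall>x\<in>\<Omega>. pos_def (B x)"
    and "r \<noteq> -1"
  shows "\<forall>x\<in>\<Omega>. grad_dot (\<lambda>y. mat_pow r (B y)) B x =
     (\<Sum>k\<in>UNIV. ad_fun (sinh_ratio r) (mat_log (B x)) (partial k (\<lambda>y. mat_pow ((r + 1) / 2) (B y)) x)
        \<cdot>\<^sub>F partial k (\<lambda>y. mat_pow ((r + 1) / 2) (B y)) x)"
proof
  fix x assume x: "x \<in> \<Omega>"
  have pdx: "pos_def (B x)" using assms(3) x by simp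
  hence sB: "sym_mat (B x)" by (simp add: pos_def_def)
  obtain V bb where oV: "orthogonal_matrix V" and Bx: "B x = V ** diag_mat bb ** transpose V"
    using decomp[OF sB] .
  have bpos: "bb j > 0" for j
  proof -
    have bk: "bb j = column j V \<bullet> (B x *v column j V)" and "norm (column j V) = 1" using eig_val[OF oV Bx] by auto
    hence "column j V \<noteq> 0" by auto
    hence "0 < column j V \<bullet> (B x *v column j V)" using pdx unfolding pos_def_def by blast
    thus ?thesis using bk by simp
  qed
  have "\<forall>x\<in>\<Omega>. foldr partial [] B differentiable (at x)" using assms(2) unfolding smooth_on_def by blast
  hence dB: "B differentiable (at x)" using x by simp
  define s where "s = (r + 1) / 2"
  have PF: "partial k (\<lambda>y. mat_pow t (B y)) x =
     (\<Sum>j\<in>UNIV. mat_fun (\<lambda>a. ddp t a (bb j)) (B x) ** partial k B x ** (V ** Emat j ** transpose V))" for k t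
  proof -
    have "partial k (\<lambda>y. mat_fun (\<lambda>a. a powr t) (B y)) x =
     (\<Sum>j\<in>UNIV. mat_fun (\<lambda>a. ddp t a (bb j)) (B x) ** partial k B x ** (V ** Emat j ** transpose V))"
      by (rule partial_mf[OF assms(1) x assms(3) dB _ _ oV Bx]) (simp_all add: ddp_fd ddp_cont)
    thus ?thesis by (simp add: mat_pow_def)
  qed
  define Z where "Z k = transpose V ** partial k B x ** V" for k
  have CF: "transpose V ** partial k (\<lambda>y. mat_pow t (B y)) x ** V = (\<chi> i l. ddp t (bb i) (bb l) * Z k $ i $ l)" for k t
    unfolding PF Z_def by (rule conj_formula[OF oV Bx])
  have logB: "mat_log (B x) = V ** diag_mat (\<lambda>i. ln (bb i)) ** transpose V"
    unfolding mat_log_def by (rule mat_fun_eq[OF oV Bx])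
  have L: "partial k (\<lambda>y. mat_pow r (B y)) x \<cdot>\<^sub>F partial k B x =
      (\<Sum>i\<in>UNIV. \<Sum>l\<in>UNIV. ddp r (bb i) (bb l) * Z k $ i $ l * Z k $ i $ l)" for k
  proof -
    have "partial k (\<lambda>y. mat_pow r (B y)) x \<cdot>\<^sub>F partial k B x =
       (transpose V ** partial k (\<lambda>y. mat_pow r (B y)) x ** V) \<cdot>\<^sub>F (transpose V ** partial k B x ** V)"
      by (rule frob_conj[OF oV, symmetric])
    thus ?thesis unfolding CF Z_def[symmetric] by (simp add: frob_def)
  qed
  have R: "ad_fun (sinh_ratio r) (mat_log (B x)) (partial k (\<lambda>y. mat_pow s (B y)) x)
        \<cdot>\<^sub>F partial k (\<lambda>y. mat_pow s (B y)) x =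
      (\<Sum>i\<in>UNIV. \<Sum>l\<in>UNIV. sinh_ratio r ((ln (bb i) - ln (bb l)) / 2) *
          (ddp s (bb i) (bb l) * Z k $ i $ l) * (ddp s (bb i) (bb l) * Z k $ i $ l))" for k
  proof -
    define P where "P = partial k (\<lambda>y. mat_pow s (B y)) x"
    define M where "M = (\<chi> i j. sinh_ratio r ((ln (bb i) - ln (bb j)) / 2) * (transpose V ** P ** V) $ i $ j)"
    have "ad_fun (sinh_ratio r) (mat_log (B x)) P = V ** M ** transpose V"
      unfolding ad_fun_eq[OF oV logB] sfun_def M_def ..
    hence "ad_fun (sinh_ratio r) (mat_log (B x)) P \<cdot>\<^sub>F P =
        (transpose V ** (V ** M ** transpose V) ** V) \<cdot>\<^sub>F (transpose V ** P ** V)"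
      using frob_conj[OF oV, of "V ** M ** transpose V" P] by simp
    also have "transpose V ** (V ** M ** transpose V) ** V = M"
      using oV by (simp add: matrix_mul_assoc orthD orth_cancel_r)
    also have "transpose V ** P ** V = (\<chi> i l. ddp s (bb i) (bb l) * Z k $ i $ l)"
      unfolding P_def by (rule CF)
    finally show ?thesis unfolding P_def M_def CF by (simp add: frob_def)
  qed
  have T: "ddp r (bb i) (bb l) * Z k $ i $ l * Z k $ i $ l =
      sinh_ratio r ((ln (bb i) - ln (bb l)) / 2) *
          (ddp s (bb i) (bb l) * Z k $ i $ l) * (ddp s (bb i) (bb l) * Z k $ i $ l)" for k i l
    using scalar_id[OF bpos bpos assms(4), of i l] unfolding s_def by (simp add: power2_eq_square)
  show "grad_dot (\<lambda>y. mat_pow r (B y)) B x =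
     (\<Sum>k\<in>UNIV. ad_fun (sinh_ratio r) (mat_log (B x)) (partial k (\<lambda>y. mat_pow ((r + 1) / 2) (B y)) x)
        \<cdot>\<^sub>F partial k (\<lambda>y. mat_pow ((r + 1) / 2) (B y)) x)"
    unfolding grad_dot_def s_def[symmetric] L R T ..
qed

end
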